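(* Let $\Upsilon$ be a bundle that is a run of the protocol $\Pi$ and is compatible with $\leadsto$. For all strands $z_0,z_1$, all messages $t,t_0,t_1$, all states $m_0,m_1$ and all keys $esk_0,esk_1,k_0,k_1$: if $\mathrm{htin}(z_0,2,\mathrm{extend}(esk_0,k_0,\mathrm{pcr}(m_0),t_0))$, $\mathrm{htin}(z_1,2,\mathrm{extend}(esk_1,k_1,\mathrm{pcr}(m_1),t_1))$, $(z_0,1)\prec(z_1,0)$, and $m_1$ has $t$, then either $\mathrm{ex}(t_0,m_0)$ is a subterm of $m_1$, or there exist a strand $z$, a state $m$ and keys $esk,k$ such that $\mathrm{htin}(z,2,\mathrm{extend}(esk,k,\mathrm{pcr}(m),t))$, $(z_0,1)\prec(z,0)$ and $(z,1)\prec(z_1,0)$.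
   Context: Messages are terms of a free order-sorted algebra with atom sorts $\mathsf{A}$ (asymmetric keys), $\mathsf{S}$ (symmetric keys), $\mathsf{D}$, $\mathsf{E}$, tag constants $g_0,g_1,\dots$, pairing $(\cdot,\cdot)$, encryption $\{t\}_k$, hashing $\#(t)$ (of sort $\mathsf{S}$), and key inverse (asymmetric $a_i^{-1}=b_i$, symmetric keys self-inverse); $s_0$ is a fixed symmetric-key constant. TPM states are terms generated by $\mathrm{bt}$ and $\mathrm{ex}(t,m)$ ($t$ a message, $m$ a state). $\mathrm{pcr}$ maps states to messages: $\mathrm{pcr}(\mathrm{bt})=s_0$, $\mathrm{pcr}(\mathrm{ex}(t,m))=\#(t,\mathrm{pcr}(m))$; $\mathrm{pcr}$ is assumed injective. The transition relation: $m_0\leadsto m_1$ iff $m_1=\mathrm{bt}$, or $m_1=\mathrm{ex}(t,m_0)$ for some $t$, or $m_0=m_1$. A path is $\pi:\mathbb{N}\to$ states with $\pi(0)=\mathrm{bt}$ and $\pi(i)\leadsto\pi(i+1)$. A state $m$ has $t$ if some $\mathrm{ex}(t,m')$ is a subterm of $m$; state $m$ is a subterm of $m'$ if $m'=\mathrm{ex}(t_1,\dots\mathrm{ex}(t_r,m)\dots)$, $r\ge0$. Strand spaces: a trace is a finite sequence of events $+t$ (transmit) or $-t$ (receive). A strand space $\Theta$ maps strands to traces; nodes are $(s,i)$ with $0\le i<|\Theta(s)|$. A bundle $(\Theta,\to)$ is a finite acyclic graph on the nodes whose edges are communication edges $n_0\to n_1$ (with $n_0$ transmitting and $n_1$ receiving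 the same message, every reception having exactly one incoming such edge) and strand-succession edges $(s,i)\Rightarrow(s,i+1)$; $\prec$ is the transitive closure of $\to\cup\Rightarrow$. A bundle is a run of $\Pi$ if each strand's trace is a prefix of some trace of some role of $\Pi$ (the adversary roles create/tag/pair/separate/encrypt/decrypt/hash, the TPM roles boot, extend, quote, decrypt, createkey, and Alice's role). $\mathrm{htin}(z,h,c)$ means strand $z$ has at least $h$ events and its trace is a prefix of $c$. Here, following the paper's abbreviation, $\mathrm{extend}(esk,k,p,t)$ denotes the state-bearing portion of the TPM extend role, the trace $-\{g_0,p\}_{\#k}\Rightarrow+\{g_0,\#(t,p)\}_{\#k}$, so $(z,0)$ receives the incoming state and $(z,1)$ transmits the outgoing state. Annotations: in each TPM role with a state-bearing pair $-\{g_0,p_0\}_{\#k}\Rightarrow+\{g_0,p_1\}_{\#k}$ (extend: $p_1=\#(t,p_0)$; boot: $p_1=s_0$; quote and decrypt: $p_1=p_0$), the transmission is annotated with $\{(m_0,m_1)\mid p_0=\mathrm{pcr}(m_0),\ p_1=\mathrm{pcr}(m_1)\}\cap\leadsto$; no other events are annotated, and a node annotated by the extend role is an instance of no other role. A bundle $\Upsilon$ is compatible with $\leadsto$ if there exist $\ell\in\mathbb{N}$, a bijection $f$ from the annotated nodes of $\Upsilon$ to $\{0,\dots,\ell-1\}$, and a path $\pi$ such that $n_0\prec n_1\iff f(n_0)<f(n_1)$ for annotated nodes, and every annotated node $n$ with annotation $a$ satisfies $(\pi(f(n)),\pi(f(n)+1))\in a$. *)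

theory Defs
  imports Main "HOL-Library.Sublist"
begin

text \<open>Atoms: asymmetric keys AKey i (a_i) and BKey i (b_i = a_i inverse),
  symmetric-key atoms SKey i and the fixed symmetric constant S0 (s_0), atoms of sorts D and E,
  tag constants Tag i (g_i), pairing, encryption Enc t k (t encrypted under k), hashing.\<close>

datatype msg =
    AKey nat | BKey nat | SKey nat | S0 | DAtom nat | EAtom nat | Tag nat
  | Pair msg msg | Enc msg msg | Hash msg

fun inv :: "msg \<Rightarrow> msg" where
  "inv (AKey i) = BKey i"
| "inv (BKey i) = AKey i"
| "inv m = m"

datatype state = Bt | Ex msg state

fun pcr :: "state \<Rightarrow> msg" where
  "pcr Bt = S0"
| "pcr (Ex t m) = Hash (Pair t (pcr m))"

definition trans :: "state \<Rightarrow> state \<Rightarrow> bool" (infix "\<leadsto>" 50) where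
  "m0 \<leadsto> m1 \<longleftrightarrow> m1 = Bt \<or> (\<exists>t. m1 = Ex t m0) \<or> m0 = m1"

definition path :: "(nat \<Rightarrow> state) \<Rightarrow> bool" where
  "path \<pi> \<longleftrightarrow> \<pi> 0 = Bt \<and> (\<forall>i. \<pi> i \<leadsto> \<pi> (Suc i))"

inductive substate :: "state \<Rightarrow> state \<Rightarrow> bool" where
  refl: "substate m m"
| ex: "substate m m' \<Longrightarrow> substate m (Ex t m')"

definition has :: "state \<Rightarrow> msg \<Rightarrow> bool" where
  "has m t \<longleftrightarrow> (\<exists>m'. substate (Ex t m') m)"

datatype event = Send msg | Recv msg

type_synonym 's node = "'s \<times> nat"

definition evt :: "('s \<Rightarrow> event list) \<Rightarrow> 's node \<Rightarrow> event" where
  "evt \<Theta> n = \<Theta> (fst n) ! snd n"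

definition nodes :: "('s \<Rightarrow> event list) \<Rightarrow> 's node set" where
  "nodes \<Theta> = {(s, i). i < length (\<Theta> s)}"

definition succ_edges :: "('s \<Rightarrow> event list) \<Rightarrow> ('s node \<times> 's node) set" where
  "succ_edges \<Theta> = {((s, i), (s, Suc i)) | s i. Suc i < length (\<Theta> s)}"

definition is_recv :: "event \<Rightarrow> bool" where
  "is_recv e \<longleftrightarrow> (\<exists>t. e = Recv t)"

definition is_bundle :: "('s \<Rightarrow> event list) \<Rightarrow> ('s node \<times> 's node) set \<Rightarrow> bool" where
  "is_bundle \<Theta> comm \<longleftrightarrow>
     finite (nodes \<Theta>) \<and>
     comm \<subseteq> nodes \<Theta> \<times> nodes \<Theta> \<and>
     (\<forall>(n0, n1) \<in> comm. \<exists>t. evt \<Theta> n0 = Send t \<and> evt \<Theta> n1 = Recv t) \<and>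
     (\<forall>n \<in> nodes \<Theta>. is_recv (evt \<Theta> n) \<longrightarrow> (\<exists>!n0. (n0, n) \<in> comm)) \<and>
     acyclic (comm \<union> succ_edges \<Theta>)"

definition prec :: "('s \<Rightarrow> event list) \<Rightarrow> ('s node \<times> 's node) set \<Rightarrow> ('s node \<times> 's node) set" where
  "prec \<Theta> comm = (comm \<union> succ_edges \<Theta>)\<^sup>+"

type_synonym annot = "(state \<times> state) set"
type_synonym atrace = "event list \<times> (nat \<Rightarrow> annot option)"

definition ann_set :: "msg \<Rightarrow> msg \<Rightarrow> annot" where
  "ann_set p0 p1 = {(m0, m1). p0 = pcr m0 \<and> p1 = pcr m1} \<inter> {(m0, m1). m0 \<leadsto> m1}"

definition is_atom :: "msg \<Rightarrow> bool" where
  "is_atom a \<longleftrightarrow> (\<exists>i. a = AKey i \<or> a = BKey i \<or> a = SKey i \<or> a = DAtom i \<or> a = EAtom i) \<or> a = S0"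

definition adversary_traces :: "event list set" where
  "adversary_traces =
      {[Send a] | a. is_atom a}
    \<union> {[Send (Tag i)] | i. True}
    \<union> {[Recv t0, Recv t1, Send (Pair t0 t1)] | t0 t1. True}
    \<union> {[Recv (Pair t0 t1), Send t0, Send t1] | t0 t1. True}
    \<union> {[Recv t, Recv k, Send (Enc t k)] | t k. True}
    \<union> {[Recv (Enc t k), Recv (inv k), Send t] | t k. True}
    \<union> {[Recv t, Send (Hash t)] | t. True}"

text \<open>Following the paper's abbreviation, extend(esk,k,p,t) is the state-bearing portion
  of the TPM extend role; the session key esk does not occur in it.\<close>
definition extend :: "msg \<Rightarrow> msg \<Rightarrow> msg \<Rightarrow> msg \<Rightarrow> event list" where
  "extend esk k p t =
     [Recv (Enc (Pair (Tag 0) p) (Hash k)), Send (Enc (Pair (Tag 0) (Hash (Pair t p))) (Hash k))]"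

definition extend_role :: "atrace set" where
  "extend_role = {(extend esk k p t,
                   \<lambda>i. if i = 1 then Some (ann_set p (Hash (Pair t p))) else None) | esk k p t. True}"

text \<open>Well-formedness of the remaining roles of the protocol (boot, quote, decrypt, createkey,
  Alice): the only annotated events are the transmissions of state-bearing pairs
  -{g0,p0}_(#k) => +{g0,p1}_(#k) with p1 = s0 (boot) or p1 = p0 (quote, decrypt),
  annotated with ann_set p0 p1.\<close>
definition ok_other_roles :: "atrace set \<Rightarrow> bool" where
  "ok_other_roles R \<longleftrightarrow>
     (\<forall>(c, ann) \<in> R. \<forall>i a. ann i = Some a \<longrightarrow>
        (\<exists>p0 p1 k. 0 < i \<and> i < length c \<and>
           c ! (i - 1) = Recv (Enc (Pair (Tag 0) p0) (Hash k)) \<and>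
           c ! i = Send (Enc (Pair (Tag 0) p1) (Hash k)) \<and>
           (p1 = S0 \<or> p1 = p0) \<and> a = ann_set p0 p1))"

definition protocol :: "atrace set \<Rightarrow> atrace set" where
  "protocol R = {(c, \<lambda>_. None) | c. c \<in> adversary_traces} \<union> extend_role \<union> R"

definition run_of :: "atrace set \<Rightarrow> ('s \<Rightarrow> event list) \<Rightarrow> ('s node \<times> 's node) set \<Rightarrow> bool" where
  "run_of P \<Theta> comm \<longleftrightarrow> is_bundle \<Theta> comm \<and> (\<forall>s. \<exists>(c, ann) \<in> P. prefix (\<Theta> s) c)"

definition annotation :: "atrace set \<Rightarrow> ('s \<Rightarrow> event list) \<Rightarrow> 's node \<Rightarrow> annot \<Rightarrow> bool" where
  "annotation P \<Theta> n a \<longleftrightarrow> n \<in> nodes \<Theta> \<and>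
     (\<exists>(c, ann) \<in> P. prefix (\<Theta> (fst n)) c \<and> ann (snd n) = Some a)"

definition annotated_nodes :: "atrace set \<Rightarrow> ('s \<Rightarrow> event list) \<Rightarrow> 's node set" where
  "annotated_nodes P \<Theta> = {n. \<exists>a. annotation P \<Theta> n a}"

definition compatible :: "atrace set \<Rightarrow> ('s \<Rightarrow> event list) \<Rightarrow> ('s node \<times> 's node) set \<Rightarrow> bool" where
  "compatible P \<Theta> comm \<longleftrightarrow>
     (\<exists>(len::nat) f \<pi>. bij_betw f (annotated_nodes P \<Theta>) {..<len} \<and> path \<pi> \<and>
        (\<forall>n0 \<in> annotated_nodes P \<Theta>. \<forall>n1 \<in> annotated_nodes P \<Theta>.
            (n0, n1) \<in> prec \<Theta> comm \<longleftrightarrow> f n0 < f n1) \<and>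
        (\<forall>n a. annotation P \<Theta> n a \<longrightarrow> (\<pi> (f n), \<pi> (Suc (f n))) \<in> a))"

definition htin :: "('s \<Rightarrow> event list) \<Rightarrow> 's \<Rightarrow> nat \<Rightarrow> event list \<Rightarrow> bool" where
  "htin \<Theta> z h c \<longleftrightarrow> h \<le> length (\<Theta> z) \<and> prefix (\<Theta> z) c"

end

theory Submission
  imports Defs
begin

lemma pcr_inj: "pcr x = pcr y \<Longrightarrow> x = y"
proof (induction x arbitrary: y)
  case Bt then show ?case by (cases y) auto
next
  case (Ex t m) then show ?case by (cases y) auto
qed
lemma hash_neq: "Hash (Pair s p) \<noteq> p"
proof
  assume "Hash (Pair s p) = p"
  then have "size (Hash (Pair s p)) = size p" by simp
  then show False by simp
qed

lemma prefix_len_eq: "prefix xs ys \<Longrightarrow> length ys \<le> length xs \<Longrightarrow> xs = ys"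
  unfolding prefix_def by auto
lemma htin_ext: "htin \<Theta> z 2 (extend esk k p t) \<Longrightarrow> \<Theta> z = extend esk k p t"
  unfolding htin_def by (rule prefix_len_eq) (simp_all add: extend_def)

lemma ann_mem: "(x, y) \<in> ann_set (pcr m) (Hash (Pair t (pcr m))) \<longleftrightarrow> x = m \<and> y = Ex t m"
proof
  assume "(x, y) \<in> ann_set (pcr m) (Hash (Pair t (pcr m)))"
  then have "pcr m = pcr x" "pcr (Ex t m) = pcr y" unfolding ann_set_def by auto
  then show "x = m \<and> y = Ex t m" using pcr_inj by metis
next
  assume "x = m \<and> y = Ex t m"
  then show "(x, y) \<in> ann_set (pcr m) (Hash (Pair t (pcr m)))" unfolding ann_set_def trans_def by auto
qed

lemma ann_A:
  assumes h: "htin \<Theta> z 2 (extend esk k (pcr m) t)"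
  shows "annotation (protocol R) \<Theta> (z,1) (ann_set (pcr m) (Hash (Pair t (pcr m))))"
proof -
  have e: "\<Theta> z = extend esk k (pcr m) t" using htin_ext[OF h] .
  have "(extend esk k (pcr m) t, \<lambda>i. if i = 1 then Some (ann_set (pcr m) (Hash (Pair t (pcr m)))) else None) \<in> protocol R"
    unfolding protocol_def extend_role_def by blast
  note mem = this
  have pf: "prefix (\<Theta> z) (extend esk k (pcr m) t)" using e by simp
  have nd: "(z,1) \<in> nodes \<Theta>" using e unfolding nodes_def extend_def by simp
  show ?thesis unfolding annotation_def
    apply (rule conjI[OF nd])
    apply (rule bexI[OF _ mem])
    using pf by simp
qed

lemma ann_B:
  assumes ok: "ok_other_roles R" and an: "annotation (protocol R) \<Theta> n a"
    and mem: "(x, Ex s x) \<in> a"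
  shows "\<exists>esk k. snd n = 1 \<and> htin \<Theta> (fst n) 2 (extend esk k (pcr x) s)"
proof -
  from an obtain c ann where nn: "n \<in> nodes \<Theta>" and cp: "(c, ann) \<in> protocol R"
    and pf: "prefix (\<Theta> (fst n)) c" and aa: "ann (snd n) = Some a"
    unfolding annotation_def by auto
  from cp consider "ann = (\<lambda>_. None)" | "(c, ann) \<in> extend_role" | "(c, ann) \<in> R"
    unfolding protocol_def by auto
  then show ?thesis
  proof cases
    case 1 then show ?thesis using aa by simp
  next
    case 2
    then obtain esk k p t' where c: "c = extend esk k p t'"
      and ann: "ann = (\<lambda>i. if i = 1 then Some (ann_set p (Hash (Pair t' p))) else None)"
      unfolding extend_role_def by auto
    have s1: "snd n = 1" using aa ann by (auto split: if_splits)
    have a: "a = ann_set p (Hash (Pair t' p))" using aa ann s1 by simp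
    from mem a have "p = pcr x" "Hash (Pair t' p) = Hash (Pair s (pcr x))"
      unfolding ann_set_def by auto
    then have "p = pcr x" "t' = s" by simp_all
    moreover have "1 < length (\<Theta> (fst n))" using nn s1 unfolding nodes_def by auto
    ultimately show ?thesis using s1 pf c unfolding htin_def by auto
  next
    case 3
    have "\<forall>i a. ann i = Some a \<longrightarrow> (\<exists>p0 p1 k. 0 < i \<and> i < length c \<and>
           c ! (i - 1) = Recv (Enc (Pair (Tag 0) p0) (Hash k)) \<and>
           c ! i = Send (Enc (Pair (Tag 0) p1) (Hash k)) \<and>
           (p1 = S0 \<or> p1 = p0) \<and> a = ann_set p0 p1)"
      using ok 3 unfolding ok_other_roles_def by blast
    then obtain p0 p1 where pp: "p1 = S0 \<or> p1 = p0" and a: "a = ann_set p0 p1"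
      using aa by blast
    from mem a have "p0 = pcr x" "p1 = Hash (Pair s (pcr x))" unfolding ann_set_def by auto
    with pp hash_neq show ?thesis by auto
  qed
qed

lemma has_Bt: "\<not> has Bt t"
  unfolding has_def by (auto elim: substate.cases)

lemma has_Ex: "has (Ex s m) t \<Longrightarrow> s = t \<or> has m t"
  unfolding has_def by (auto elim: substate.cases)

lemma inv_C:
  assumes p: "path \<pi>"
  shows "i0 \<le> i \<Longrightarrow> has (\<pi> i) t \<Longrightarrow>
     substate (\<pi> i0) (\<pi> i) \<or> (\<exists>k. i0 \<le> k \<and> k < i \<and> \<pi> (Suc k) = Ex t (\<pi> k))"
proof (induction i)
  case 0 then show ?case by (auto intro: substate.refl)
next
  case (Suc i)
  show ?case
  proof (cases "i0 = Suc i")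
    case True then show ?thesis by (auto intro: substate.refl)
  next
    case False
    then have le: "i0 \<le> i" using Suc.prems by simp
    have st: "\<pi> i \<leadsto> \<pi> (Suc i)" using p unfolding path_def by auto
    then consider "\<pi> (Suc i) = Bt" | s where "\<pi> (Suc i) = Ex s (\<pi> i)" | "\<pi> (Suc i) = \<pi> i"
      unfolding trans_def by auto
    then show ?thesis
    proof cases
      case 1 then show ?thesis using Suc.prems has_Bt by metis
    next
      case (2 s)
      then have "s = t \<or> has (\<pi> i) t" using Suc.prems has_Ex by metis
      then show ?thesis
      proof
        assume "s = t" then show ?thesis using 2 le by auto
      next
        assume "has (\<pi> i) t"
        with Suc.IH le have "substate (\<pi> i0) (\<pi> i) \<or> (\<exists>k\<ge>i0. k < i \<and> \<pi> (Suc k) = Ex t (\<pi> k))" by blast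
        then show ?thesis using 2 by (auto intro: substate.ex less_SucI)
      qed
    next
      case 3
      with Suc.IH le Suc.prems show ?thesis by (auto intro: less_SucI)
    qed
  qed
qed

lemma prec_D:
  assumes b: "is_bundle \<Theta> comm" and pr: "(x, (z, Suc 0)) \<in> prec \<Theta> comm"
    and ev: "evt \<Theta> (z, Suc 0) = Send u"
  shows "x = (z, 0) \<or> (x, (z, 0)) \<in> prec \<Theta> comm"
proof -
  have edge: "c = (z, 0)" if "(c, (z, Suc 0)) \<in> comm \<union> succ_edges \<Theta>" for c
  proof -
    have "(c, (z, Suc 0)) \<notin> comm" using b ev unfolding is_bundle_def by fastforce
    then show ?thesis using that unfolding succ_edges_def by auto
  qed
  from pr have "(x, (z, Suc 0)) \<in> (comm \<union> succ_edges \<Theta>)\<^sup>+" unfolding prec_def .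
  then show ?thesis
  proof (cases rule: tranclE)
    case base
    then show ?thesis using edge by blast
  next
    case (step c)
    then have "c = (z, 0)" using edge by blast
    then show ?thesis using step unfolding prec_def by simp
  qed
qed

theorem theorem1:
  fixes \<Theta> :: "'s \<Rightarrow> event list" and comm :: "('s node \<times> 's node) set"
    and R :: "atrace set"
    and z0 z1 :: 's and t t0 t1 :: msg and m0 m1 :: state and esk0 esk1 k0 k1 :: msg
  assumes "ok_other_roles R"
    and "run_of (protocol R) \<Theta> comm"
    and "compatible (protocol R) \<Theta> comm"
    and "htin \<Theta> z0 2 (extend esk0 k0 (pcr m0) t0)"
    and "htin \<Theta> z1 2 (extend esk1 k1 (pcr m1) t1)"
    and "((z0, 1), (z1, 0)) \<in> prec \<Theta> comm"
    and "has m1 t"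
  shows "substate (Ex t0 m0) m1 \<or>
         (\<exists>z m esk k. htin \<Theta> z 2 (extend esk k (pcr m) t) \<and>
            ((z0, 1), (z, 0)) \<in> prec \<Theta> comm \<and> ((z, 1), (z1, 0)) \<in> prec \<Theta> comm)"
proof -
  note ok = assms(1)
  have b: "is_bundle \<Theta> comm" using assms(2) unfolding run_of_def by auto
  from assms(3) obtain len f \<pi> where bij: "bij_betw f (annotated_nodes (protocol R) \<Theta>) {..<len}"
    and p: "path \<pi>"
    and ord: "\<forall>n0 \<in> annotated_nodes (protocol R) \<Theta>. \<forall>n1 \<in> annotated_nodes (protocol R) \<Theta>.
            (n0, n1) \<in> prec \<Theta> comm \<longleftrightarrow> f n0 < f n1"
    and an: "\<forall>n a. annotation (protocol R) \<Theta> n a \<longrightarrow> (\<pi> (f n), \<pi> (Suc (f n))) \<in> a"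
    unfolding compatible_def by blast
  have A0: "annotation (protocol R) \<Theta> (z0,1) (ann_set (pcr m0) (Hash (Pair t0 (pcr m0))))"
    using ann_A[OF assms(4)] .
  have A1: "annotation (protocol R) \<Theta> (z1,1) (ann_set (pcr m1) (Hash (Pair t1 (pcr m1))))"
    using ann_A[OF assms(5)] .
  have N0: "(z0,1) \<in> annotated_nodes (protocol R) \<Theta>" using A0 unfolding annotated_nodes_def by blast
  have N1: "(z1,1) \<in> annotated_nodes (protocol R) \<Theta>" using A1 unfolding annotated_nodes_def by blast
  have pi0: "\<pi> (Suc (f (z0,1))) = Ex t0 m0" using an A0 ann_mem by blast
  have pi1: "\<pi> (f (z1,1)) = m1" using an A1 ann_mem by blast
  have e0: "\<Theta> z0 = extend esk0 k0 (pcr m0) t0" using htin_ext[OF assms(4)] .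
  have e1: "\<Theta> z1 = extend esk1 k1 (pcr m1) t1" using htin_ext[OF assms(5)] .
  have "((z1,0),(z1,1)) \<in> succ_edges \<Theta>" using e1 unfolding succ_edges_def extend_def by auto
  then have "((z0,1),(z1,1)) \<in> prec \<Theta> comm" using assms(6) unfolding prec_def
    by (meson UnI2 trancl_into_trancl)
  then have lt: "f (z0,1) < f (z1,1)" using ord N0 N1 by blast
  have "Suc (f (z0,1)) \<le> f (z1,1)" using lt by simp
  from inv_C[OF p this] assms(7) pi0 pi1
  have "substate (Ex t0 m0) m1 \<or> (\<exists>k. Suc (f (z0,1)) \<le> k \<and> k < f (z1,1) \<and> \<pi> (Suc k) = Ex t (\<pi> k))"
    by simp
  then show ?thesis
  proof
    assume "\<exists>k. Suc (f (z0,1)) \<le> k \<and> k < f (z1,1) \<and> \<pi> (Suc k) = Ex t (\<pi> k)"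
    then obtain k where k1: "Suc (f (z0,1)) \<le> k" and k2: "k < f (z1,1)"
      and k3: "\<pi> (Suc k) = Ex t (\<pi> k)" by blast
    have "f (z1,1) < len" using bij N1 bij_betw_apply by fastforce
    then have "k \<in> f ` annotated_nodes (protocol R) \<Theta>" using k2 bij unfolding bij_betw_def by auto
    then obtain n where nN: "n \<in> annotated_nodes (protocol R) \<Theta>" and fn: "f n = k" by blast
    then obtain a where na: "annotation (protocol R) \<Theta> n a" unfolding annotated_nodes_def by blast
    have "(\<pi> k, Ex t (\<pi> k)) \<in> a" using an na fn k3 by metis
    from ann_B[OF ok na this] obtain esk kk where s1: "snd n = 1"
      and h: "htin \<Theta> (fst n) 2 (extend esk kk (pcr (\<pi> k)) t)" by blast
    define z where "z = fst n"
    have nz: "n = (z, 1)" using s1 z_def by (cases n) auto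
    have ez: "\<Theta> z = extend esk kk (pcr (\<pi> k)) t" using htin_ext h z_def by metis
    have p1: "((z0,1),(z,1)) \<in> prec \<Theta> comm" using ord N0 nN nz fn k1 by auto
    have p2: "((z,1),(z1,1)) \<in> prec \<Theta> comm" using ord N1 nN nz fn k2 by auto
    have evz: "evt \<Theta> (z, Suc 0) = Send (Enc (Pair (Tag 0) (Hash (Pair t (pcr (\<pi> k))))) (Hash kk))"
      using ez unfolding evt_def extend_def by simp
    have ev1: "evt \<Theta> (z1, Suc 0) = Send (Enc (Pair (Tag 0) (Hash (Pair t1 (pcr m1)))) (Hash k1))"
      using e1 unfolding evt_def extend_def by simp
    have q1: "((z0,1),(z,0)) \<in> prec \<Theta> comm" using prec_D[OF b _ evz] p1 by auto
    have q2: "((z,1),(z1,0)) \<in> prec \<Theta> comm" using prec_D[OF b _ ev1] p2 by auto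
    show ?thesis using h q1 q2 z_def by blast
  qed auto
qed

end
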